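(* The degree histogram problem (on incremental graph streams, with error measured in $\ell_\infty$) admits an extendable bitwise AND gadget with $v(d)=O(d)$ and $t(d)=O(d^2)$.
   Context: The degree histogram of an $n$-vertex graph is $(d_1,\dots,d_{n-1})$ where $d_i$ is the number of vertices of degree $i$; the range carries the $\ell_\infty$ norm. Let $\zeta\in\mathbb N$ be a fixed constant and $m=\zeta d$. An extendable bitwise AND gadget for a graph function $g$ consists of positive increasing functions $v,t:\mathbb N\to\mathbb N$ and, for each $d$: an initial graph $H_{\mathrm{init}}=(V,E_0)$ with $|V|=v(d)$; edges $e_1,\dots,e_d\in\binom V2$, defining $H^1_x=H_{\mathrm{init}}\cup\{e_i: x_i=1\}$ for $x\in\{0,1\}^d$; and for every sequence of queries $q^1,\dots,q^m\in\{0,1\}^d$, edge sets $S^1,T^1,\dots,S^m,T^m$ and functions $\mathrm{dec}_j:\mathrm{Range}(g)\to\mathbb R$ (depending on the queries but not on $x$) such that: (a) each $\mathrm{dec}_j$ is $1$-Lipschitz with respect to the norm on $\mathrm{Range}(g)$; (b) with $Q^j_x=H^j_x\cup S^j$, $\mathrm{dec}_j(g(Q^j_x))-\mathrm{dec}_j(g(H^j_x))=\langle x,q^j\rangle$ for all $x$; (c) $H^{j+1}_x=Q^j_x\cup T^j$; and the total number of edge insertions $|E_0|+d+\sum_j(|S^j|+|T^j|)$ is at most $t(d)$. *)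

theory Defs
  imports Main "HOL-Library.Landau_Symbols"
begin

definition edges_on :: "nat set \<Rightarrow> nat set set" where
  "edges_on V = {e. e \<subseteq> V \<and> card e = 2}"

definition vdegree :: "nat set set \<Rightarrow> nat \<Rightarrow> nat" where
  "vdegree E u = card {e \<in> E. u \<in> e}"

definition deg_hist :: "nat set \<Rightarrow> nat set set \<Rightarrow> (nat \<Rightarrow> real)" where
  "deg_hist V E = (\<lambda>i. if 1 \<le> i \<and> i < card V
                        then real (card {u \<in> V. vdegree E u = i}) else 0)"

definition linf_dist :: "nat \<Rightarrow> (nat \<Rightarrow> real) \<Rightarrow> (nat \<Rightarrow> real) \<Rightarrow> real" where
  "linf_dist n a b = Max (insert 0 ((\<lambda>i. \<bar>a i - b i\<bar>) ` {1..<n}))"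

text \<open>Bit vectors in {0,1}^d are represented as nat => bool, coordinates 0..d-1.\<close>

definition bit_inner :: "nat \<Rightarrow> (nat \<Rightarrow> bool) \<Rightarrow> (nat \<Rightarrow> bool) \<Rightarrow> real" where
  "bit_inner d x q = real (card {i. i < d \<and> x i \<and> q i})"

text \<open>The graphs H^{j+1}_x of the paper (0-indexed here: Hs ... j is H^{j+1}_x).\<close>

fun Hs :: "nat set set \<Rightarrow> (nat \<Rightarrow> nat set) \<Rightarrow> nat \<Rightarrow> (nat \<Rightarrow> nat set set) \<Rightarrow>
           (nat \<Rightarrow> nat set set) \<Rightarrow> (nat \<Rightarrow> bool) \<Rightarrow> nat \<Rightarrow> nat set set" where
  "Hs E0 e d S T x 0 = E0 \<union> {e i | i. i < d \<and> x i}"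
| "Hs E0 e d S T x (Suc j) = Hs E0 e d S T x j \<union> S j \<union> T j"

text \<open>Extendable bitwise AND gadget for a graph function g (values nat => real) whose
  range carries the distance dist (depending on the number of vertices), with m = zeta*d
  queries. Queries q^{j+1} = qs j, j < m.\<close>

definition ext_AND_gadget ::
  "(nat set \<Rightarrow> nat set set \<Rightarrow> (nat \<Rightarrow> real)) \<Rightarrow>
   (nat \<Rightarrow> (nat \<Rightarrow> real) \<Rightarrow> (nat \<Rightarrow> real) \<Rightarrow> real) \<Rightarrow>
   nat \<Rightarrow> (nat \<Rightarrow> nat) \<Rightarrow> (nat \<Rightarrow> nat) \<Rightarrow> bool" where
  "ext_AND_gadget g \<delta> \<zeta> v t \<longleftrightarrow>
     (\<forall>d. 0 < v d \<and> 0 < t d) \<and> mono v \<and> mono t \<and>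
     (\<forall>d. \<exists>V E0 e.
        finite V \<and> card V = v d \<and> E0 \<subseteq> edges_on V \<and> (\<forall>i<d. e i \<in> edges_on V) \<and>
        (\<forall>qs :: nat \<Rightarrow> nat \<Rightarrow> bool. \<exists>S T dec.
           (\<forall>j < \<zeta> * d. S j \<subseteq> edges_on V \<and> T j \<subseteq> edges_on V) \<and>
           (\<forall>j < \<zeta> * d. \<forall>a b. \<bar>dec j a - dec j b\<bar> \<le> \<delta> (card V) a b) \<and>
           (\<forall>j < \<zeta> * d. \<forall>x.
              dec j (g V (Hs E0 e d S T x j \<union> S j)) - dec j (g V (Hs E0 e d S T x j))
                = bit_inner d x (qs j)) \<and>
           card E0 + d + (\<Sum>j<\<zeta> * d. card (S j) + card (T j)) \<le> t d))"

end

theory Submission imports Defs "HOL-Library.Landau_Symbols" begin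

lemma deg_eq:
  assumes "\<forall>e\<in>E. card e = 2"
  shows "vdegree E u = card {w. {u,w} \<in> E}"
proof -
  have "bij_betw (\<lambda>w. {u,w}) {w. {u,w} \<in> E} {e\<in>E. u\<in>e}"
  proof (rule bij_betwI')
    fix x y assume "x \<in> {w. {u,w} \<in> E}" "y \<in> {w. {u,w} \<in> E}"
    then have "card {u,x} = 2" "card {u,y} = 2" using assms by auto
    then have "x \<noteq> u" "y \<noteq> u" by auto
    then show "({u, x} = {u, y}) = (x = y)" by (auto simp: doubleton_eq_iff)
  next
    fix e assume "e \<in> {e\<in>E. u\<in>e}"
    then have "card e = 2" "u \<in> e" "e \<in> E" using assms by auto
    then obtain a b where "e = {a,b}" "a \<noteq> b" by (auto simp: card_2_iff)
    then show "\<exists>w\<in>{w. {u,w} \<in> E}. e = {u,w}" using \<open>u\<in>e\<close> \<open>e\<in>E\<close>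
      by (metis doubleton_eq_iff insertE mem_Collect_eq singletonD)
  qed auto
  then show ?thesis unfolding vdegree_def by (simp add: bij_betw_same_card)
qed

lemma nb_low:
  assumes "\<And>i w. R i w \<Longrightarrow> i < (d::nat) \<and> d \<le> w" "i < d"
  shows "{w. {i,w} \<in> {{i',w'} | i' w'. R i' w'}} = {w. R i w}"
  using assms by (auto simp: doubleton_eq_iff) (metis not_le)+

lemma nb_high:
  assumes "\<And>i w. R i w \<Longrightarrow> i < (d::nat) \<and> d \<le> w" "d \<le> u"
  shows "{w. {u,w} \<in> {{i',w'} | i' w'. R i' w'}} \<subseteq> {..<d}"
  using assms by (auto simp: doubleton_eq_iff) (metis not_le)+

lemma card2:
  assumes "\<And>i w. R i w \<Longrightarrow> i < (d::nat) \<and> d \<le> w"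
  shows "\<forall>e\<in>{{i',w'} | i' w'. R i' w'}. card e = 2"
  using assms by fastforce

lemma lips:
  assumes "K \<in> {1..<n}"
  shows "\<bar>a K - b K\<bar> \<le> linf_dist n a b"
  unfolding linf_dist_def using assms by (intro Max_ge) auto


definition E0g :: "nat \<Rightarrow> nat set set" where
  "E0g d = {{i,w} | i w. i<d \<and> 2*d \<le> w \<and> w \<le> 3*d}"
definition eg :: "nat \<Rightarrow> nat \<Rightarrow> nat set" where "eg d i = {i, d+i}"
definition Sg :: "nat \<Rightarrow> (nat \<Rightarrow> nat \<Rightarrow> bool) \<Rightarrow> nat \<Rightarrow> nat set set" where
  "Sg d qs j = (\<lambda>i. {i, 3*d+1+j}) ` {i. i<d \<and> qs j i}"
definition Tg :: "nat \<Rightarrow> (nat \<Rightarrow> nat \<Rightarrow> bool) \<Rightarrow> nat \<Rightarrow> nat set set" where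
  "Tg d qs j = (\<lambda>i. {i, 3*d+1+j}) ` {i. i<d \<and> \<not> qs j i}"

definition RB :: "nat \<Rightarrow> (nat \<Rightarrow> bool) \<Rightarrow> nat \<Rightarrow> nat \<Rightarrow> nat \<Rightarrow> bool" where
  "RB d x j i w \<longleftrightarrow> i<d \<and> ((2*d \<le> w \<and> w < 3*d+1+j) \<or> (x i \<and> w = d+i))"
definition RA :: "nat \<Rightarrow> (nat \<Rightarrow> nat \<Rightarrow> bool) \<Rightarrow> (nat \<Rightarrow> bool) \<Rightarrow> nat \<Rightarrow> nat \<Rightarrow> nat \<Rightarrow> bool" where
  "RA d qs x j i w \<longleftrightarrow> RB d x j i w \<or> (i<d \<and> qs j i \<and> w = 3*d+1+j)"

lemma Hs_eq: "Hs (E0g d) (eg d) d (Sg d qs) (Tg d qs) x j = {{i,w} | i w. RB d x j i w}"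
proof (induction j)
  case 0
  show ?case
  proof (rule set_eqI, rule iffI)
    fix e assume "e \<in> Hs (E0g d) (eg d) d (Sg d qs) (Tg d qs) x 0"
    then have "(\<exists>i w. e = {i,w} \<and> i<d \<and> 2*d \<le> w \<and> w \<le> 3*d) \<or> (\<exists>i. e = {i, d+i} \<and> i<d \<and> x i)"
      unfolding E0g_def eg_def by auto
    then show "e \<in> {{i,w} | i w. RB d x 0 i w}" unfolding RB_def
      by (elim disjE exE conjE) (simp, blast intro: le_imp_less_Suc)+
  next
    fix e assume "e \<in> {{i,w} | i w. RB d x 0 i w}"
    then obtain i w where iw: "e = {i,w}" "RB d x 0 i w" by blast
    then show "e \<in> Hs (E0g d) (eg d) d (Sg d qs) (Tg d qs) x 0"
    proof -
      have "i<d" "(2*d \<le> w \<and> w < 3*d+1) \<or> (x i \<and> w = d+i)" using iw(2) unfolding RB_def by auto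
      then consider "i<d" "2*d \<le> w" "w \<le> 3*d" | "i<d" "x i" "w = d+i" by linarith
      then show ?thesis
      proof cases
        case 1 then have "e \<in> E0g d" unfolding E0g_def using iw(1) by blast
        then show ?thesis by simp
      next
        case 2 then have "e \<in> {eg d i | i. i < d \<and> x i}" unfolding eg_def using iw(1) by blast
        then show ?thesis by simp
      qed
    qed
  qed
next
  case (Suc j)
  have SgT: "Sg d qs j \<union> Tg d qs j = {{i, 3*d+1+j} | i. i<d}"
    unfolding Sg_def Tg_def by auto
  have "{{i,w} | i w. RB d x (Suc j) i w} = {{i,w} | i w. RB d x j i w} \<union> {{i, 3*d+1+j} | i. i<d}"
  proof (rule set_eqI, rule iffI)
    fix e assume "e \<in> {{i,w} | i w. RB d x (Suc j) i w}"
    then obtain i w where "e = {i,w}" "RB d x (Suc j) i w" by blast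
    then show "e \<in> {{i,w} | i w. RB d x j i w} \<union> {{i, 3*d+1+j} | i. i<d}"
    proof -
      have "RB d x j i w \<or> (i<d \<and> w = 3*d+1+j)" using \<open>RB d x (Suc j) i w\<close> unfolding RB_def by auto
      then show ?thesis using \<open>e = {i,w}\<close> by blast
    qed
  next
    fix e assume "e \<in> {{i,w} | i w. RB d x j i w} \<union> {{i, 3*d+1+j} | i. i<d}"
    then consider (a) i w where "e = {i,w}" "RB d x j i w" | (b) i where "e = {i, 3*d+1+j}" "i<d" by blast
    then show "e \<in> {{i,w} | i w. RB d x (Suc j) i w}"
    proof cases
      case (a i w) then have "RB d x (Suc j) i w" unfolding RB_def by auto
      then show ?thesis using a(1) by blast
    next
      case (b i) then have "RB d x (Suc j) i (3*d+1+j)" unfolding RB_def by auto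
      then show ?thesis using b(1) by blast
    qed
  qed
  then show ?case using Suc SgT by (simp add: Un_assoc)
qed

lemma HsS_eq: "Hs (E0g d) (eg d) d (Sg d qs) (Tg d qs) x j \<union> Sg d qs j = {{i,w} | i w. RA d qs x j i w}"
proof -
  have "{{i,w} | i w. RA d qs x j i w} = {{i,w} | i w. RB d x j i w} \<union> Sg d qs j"
    unfolding RA_def Sg_def by blast
  then show ?thesis unfolding Hs_eq by simp
qed

lemma RB_ok: "RB d x j i w \<Longrightarrow> i < d \<and> d \<le> w" unfolding RB_def by auto
lemma RA_ok: "RA d qs x j i w \<Longrightarrow> i < d \<and> d \<le> w" unfolding RA_def RB_def by auto

lemma degB_low: assumes "i<d"
  shows "vdegree {{i,w} | i w. RB d x j i w} i = d+1+j + (if x i then 1 else 0)"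
proof -
  have "vdegree {{i,w} | i w. RB d x j i w} i = card {w. {i,w} \<in> {{i,w} | i w. RB d x j i w}}"
    by (rule deg_eq[OF card2[of "RB d x j" d, OF RB_ok]])
  also have "\<dots> = card {w. RB d x j i w}"
    using nb_low[of "RB d x j" d i, OF RB_ok assms] by simp
  also have "{w. RB d x j i w} = {2*d..<3*d+1+j} \<union> (if x i then {d+i} else {})"
    using assms unfolding RB_def by auto
  also have "card \<dots> = d+1+j + (if x i then 1 else 0)" using assms by auto
  finally show ?thesis .
qed

lemma degA_low: assumes "i<d"
  shows "vdegree {{i,w} | i w. RA d qs x j i w} i = d+1+j + (if x i then 1 else 0) + (if qs j i then 1 else 0)"
proof -
  have "vdegree {{i,w} | i w. RA d qs x j i w} i = card {w. {i,w} \<in> {{i,w} | i w. RA d qs x j i w}}"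
    by (rule deg_eq[OF card2[of "RA d qs x j" d, OF RA_ok]])
  also have "\<dots> = card {w. RA d qs x j i w}"
    using nb_low[of "RA d qs x j" d i, OF RA_ok assms] by simp
  also have "{w. RA d qs x j i w} = ({2*d..<3*d+1+j} \<union> (if x i then {d+i} else {})) \<union> (if qs j i then {3*d+1+j} else {})"
    using assms unfolding RA_def RB_def by auto
  also have "card \<dots> = d+1+j + (if x i then 1 else 0) + (if qs j i then 1 else 0)" using assms by auto
  finally show ?thesis .
qed

lemma deg_high:
  assumes "\<And>i w. R i w \<Longrightarrow> i < (d::nat) \<and> d \<le> w" "d \<le> u"
  shows "vdegree {{i',w'} | i' w'. R i' w'} u \<le> d"
proof -
  have "vdegree {{i',w'} | i' w'. R i' w'} u = card {w. {u,w} \<in> {{i',w'} | i' w'. R i' w'}}"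
    by (rule deg_eq[OF card2[of R d, OF assms(1)]])
  also have "\<dots> \<le> card {..<d}" by (rule card_mono[OF _ nb_high[OF assms]]) auto
  finally show ?thesis by simp
qed


lemma card_E0g: "card (E0g d) \<le> d*(d+1)"
proof -
  have "E0g d = (\<lambda>(i,w). {i,w}) ` ({..<d} \<times> {2*d..3*d})" unfolding E0g_def 
  proof (rule set_eqI, rule iffI)
    fix e assume "e \<in> {{i,w} | i w. i<d \<and> 2*d \<le> w \<and> w \<le> 3*d}"
    then obtain i w where "e = {i,w}" "i<d" "2*d \<le> w" "w \<le> 3*d" by blast
    then show "e \<in> (\<lambda>(i,w). {i,w}) ` ({..<d} \<times> {2*d..3*d})"
      by (intro image_eqI[of _ _ "(i,w)"]) auto
  next
    fix e assume "e \<in> (\<lambda>(i,w). {i,w}) ` ({..<d} \<times> {2*d..3*d})"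
    then obtain i w where "e = {i,w}" "i<d" "2*d \<le> w" "w \<le> 3*d" by auto
    then show "e \<in> {{i,w} | i w. i<d \<and> 2*d \<le> w \<and> w \<le> 3*d}" by blast
  qed
  then have "card (E0g d) \<le> card ({..<d} \<times> {2*d..3*d})" by (metis card_image_le finite_SigmaI finite_atLeastAtMost finite_lessThan)
  also have "\<dots> = d*(d+1)" by (simp add: card_cartesian_product)
  finally show ?thesis .
qed

lemma card_Sg: "card (Sg d qs j) \<le> d"
proof -
  have "card (Sg d qs j) \<le> card {i. i<d \<and> qs j i}" unfolding Sg_def by (rule card_image_le) auto
  also have "\<dots> \<le> card {..<d}" by (rule card_mono) auto
  finally show ?thesis by simp
qed

lemma card_Tg: "card (Tg d qs j) \<le> d"
proof -
  have "card (Tg d qs j) \<le> card {i. i<d \<and> \<not> qs j i}" unfolding Tg_def by (rule card_image_le) auto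
  also have "\<dots> \<le> card {..<d}" by (rule card_mono) auto
  finally show ?thesis by simp
qed

lemma hist_B: assumes "j < \<zeta>*d"
  shows "deg_hist {..<3*d+1+\<zeta>*d} {{i,w} | i w. RB d x j i w} (d+3+j) = 0"
proof -
  have "{u \<in> {..<3*d+1+\<zeta>*d}. vdegree {{i,w} | i w. RB d x j i w} u = d+3+j} = {}"
  proof (rule ccontr)
    assume "\<not> ?thesis"
    then obtain u where u: "vdegree {{i,w} | i w. RB d x j i w} u = d+3+j" by blast
    show False
    proof (cases "u < d")
      case True then show ?thesis using u degB_low[OF True, of x j] by (auto split: if_splits)
    next
      case False then have du: "d \<le> u" by simp
      then show ?thesis using u deg_high[of "RB d x j" d u, OF RB_ok du] by auto
    qed
  qed
  then show ?thesis unfolding deg_hist_def by simp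
qed

lemma hist_A: assumes "j < \<zeta>*d"
  shows "deg_hist {..<3*d+1+\<zeta>*d} {{i,w} | i w. RA d qs x j i w} (d+3+j) = bit_inner d x (qs j)"
proof -
  have "{u \<in> {..<3*d+1+\<zeta>*d}. vdegree {{i,w} | i w. RA d qs x j i w} u = d+3+j} = {i. i<d \<and> x i \<and> qs j i}"
  proof (rule set_eqI, rule iffI)
    fix u assume "u \<in> {u \<in> {..<3*d+1+\<zeta>*d}. vdegree {{i,w} | i w. RA d qs x j i w} u = d+3+j}"
    then have u: "vdegree {{i,w} | i w. RA d qs x j i w} u = d+3+j" by blast
    show "u \<in> {i. i<d \<and> x i \<and> qs j i}"
    proof (cases "u < d")
      case True then show ?thesis using u degA_low[OF True, of qs x j] by (auto split: if_splits)
    next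
      case False then have du: "d \<le> u" by simp
      then show ?thesis using u deg_high[of "RA d qs x j" d u, OF RA_ok du] by auto
    qed
  next
    fix u assume "u \<in> {i. i<d \<and> x i \<and> qs j i}"
    then show "u \<in> {u \<in> {..<3*d+1+\<zeta>*d}. vdegree {{i,w} | i w. RA d qs x j i w} u = d+3+j}"
      using degA_low[of u d qs x j] by auto
  qed
  moreover have "d \<ge> 1" using assms by (cases d) auto
  then have "1 \<le> d+3+j \<and> d+3+j < card {..<3*d+1+\<zeta>*d}" using assms by auto
  ultimately show ?thesis unfolding deg_hist_def bit_inner_def by simp
qed

lemma bv: "(\<lambda>d. real (3*d+1+\<zeta>*d)) \<in> O(\<lambda>d. real d)"
proof (rule bigoI[where c = "4 + real \<zeta>"])
  show "\<forall>\<^sub>F d in at_top. norm (real (3*d+1+\<zeta>*d)) \<le> (4 + real \<zeta>) * norm (real d)"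
    using eventually_ge_at_top[of "1::nat"]
  proof eventually_elim
    case (elim d)
    have e: "norm (real (3*d+1+\<zeta>*d)) = 3*real d + 1 + real \<zeta> * real d" by simp
    have f: "(4 + real \<zeta>) * norm (real d) = 4 * real d + real \<zeta> * real d" by (simp add: distrib_right)
    have "1 \<le> real d" using elim by simp
    then show ?case unfolding e f by linarith
  qed
qed
lemma bt: "(\<lambda>d. real (d*(d+1) + d + 2*\<zeta>*d*d + 1)) \<in> O(\<lambda>d. (real d)^2)"
proof (rule bigoI[where c = "4 + 2 * real \<zeta>"])
  show "\<forall>\<^sub>F d in at_top. norm (real (d*(d+1) + d + 2*\<zeta>*d*d + 1)) \<le> (4 + 2 * real \<zeta>) * norm ((real d)^2)"
    using eventually_ge_at_top[of "1::nat"]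
  proof eventually_elim
    case (elim d)
    define D where "D = real d * real d"
    have e: "norm (real (d*(d+1) + d + 2*\<zeta>*d*d + 1)) = D + 2 * real d + 2 * (real \<zeta> * D) + 1"
      unfolding D_def by (simp add: algebra_simps)
    have f: "(4 + 2 * real \<zeta>) * norm ((real d)^2) = 4 * D + 2 * (real \<zeta> * D)"
      unfolding D_def by (simp add: algebra_simps power2_eq_square)
    have d1: "1 \<le> real d" using elim by simp
    have "real d * 1 \<le> real d * real d" using d1 by (intro mult_left_mono) auto
    then have g: "real d \<le> D" unfolding D_def by simp
    have h: "1 \<le> D" using g d1 by linarith
    show ?case unfolding e f using g h by linarith
  qed
qed

theorem mainTheorem5:
  fixes \<zeta> :: nat
  shows "\<exists>v t. ext_AND_gadget deg_hist linf_dist \<zeta> v t \<and>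
           (\<lambda>d. real (v d)) \<in> O(\<lambda>d. real d) \<and>
           (\<lambda>d. real (t d)) \<in> O(\<lambda>d. (real d)^2)"
proof (intro exI conjI)
  let ?v = "\<lambda>d. 3*d+1+\<zeta>*d"
  let ?t = "\<lambda>d. d*(d+1) + d + 2*\<zeta>*d*d + 1"
  show "ext_AND_gadget deg_hist linf_dist \<zeta> ?v ?t"
    unfolding ext_AND_gadget_def
  proof (intro conjI allI)
    show "mono ?v" by (intro monoI add_mono mult_le_mono) auto
    show "mono ?t" by (intro monoI add_mono mult_le_mono) auto
    fix d
    show "0 < ?v d" by auto
    show "0 < ?t d" by auto
    let ?V = "{..<3*d+1+\<zeta>*d}"
    show "\<exists>V E0 e. finite V \<and> card V = ?v d \<and> E0 \<subseteq> edges_on V \<and> (\<forall>i<d. e i \<in> edges_on V) \<and>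
        (\<forall>qs :: nat \<Rightarrow> nat \<Rightarrow> bool. \<exists>S T dec.
           (\<forall>j < \<zeta> * d. S j \<subseteq> edges_on V \<and> T j \<subseteq> edges_on V) \<and>
           (\<forall>j < \<zeta> * d. \<forall>a b. \<bar>dec j a - dec j b\<bar> \<le> linf_dist (card V) a b) \<and>
           (\<forall>j < \<zeta> * d. \<forall>x.
              dec j (deg_hist V (Hs E0 e d S T x j \<union> S j)) - dec j (deg_hist V (Hs E0 e d S T x j))
                = bit_inner d x (qs j)) \<and>
           card E0 + d + (\<Sum>j<\<zeta> * d. card (S j) + card (T j)) \<le> ?t d)"
    proof (intro exI conjI allI impI)
      show "finite ?V" by simp
      show "card ?V = ?v d" by simp
      show "E0g d \<subseteq> edges_on ?V" unfolding E0g_def edges_on_def by auto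
      show "eg d i \<in> edges_on ?V" if "i < d" for i using that unfolding eg_def edges_on_def by auto
      fix qs :: "nat \<Rightarrow> nat \<Rightarrow> bool"
      show "Sg d qs j \<subseteq> edges_on ?V" if "j < \<zeta>*d" for j
        using that unfolding Sg_def edges_on_def by auto
      show "Tg d qs j \<subseteq> edges_on ?V" if "j < \<zeta>*d" for j
        using that unfolding Tg_def edges_on_def by auto
      show "\<bar>a (d+3+j) - b (d+3+j)\<bar> \<le> linf_dist (card ?V) a b" if "j < \<zeta>*d" for j and a b :: "nat \<Rightarrow> real"
      proof -
        have "d \<ge> 1" using that by (cases d) auto
        then show ?thesis using that by (intro lips) auto
      qed
      show "deg_hist ?V (Hs (E0g d) (eg d) d (Sg d qs) (Tg d qs) x j \<union> Sg d qs j) (d+3+j)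
          - deg_hist ?V (Hs (E0g d) (eg d) d (Sg d qs) (Tg d qs) x j) (d+3+j) = bit_inner d x (qs j)"
        if "j < \<zeta>*d" for j x
        unfolding HsS_eq by (subst Hs_eq) (use hist_A[OF that, of qs x] hist_B[OF that, of x] in linarith)
      have "(\<Sum>j<\<zeta> * d. card (Sg d qs j) + card (Tg d qs j)) \<le> (\<Sum>j<\<zeta> * d. 2*d)"
        by (intro sum_mono) (metis add_mono card_Sg card_Tg mult_2)
      also have "\<dots> = 2*\<zeta>*d*d" by (simp add: sum_constant)
      finally show "card (E0g d) + d + (\<Sum>j<\<zeta> * d. card (Sg d qs j) + card (Tg d qs j)) \<le> ?t d"
        using card_E0g[of d] by linarith
    qed
  qed
  show "(\<lambda>d. real (?v d)) \<in> O(\<lambda>d. real d)" by (rule bv)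
  show "(\<lambda>d. real (?t d)) \<in> O(\<lambda>d. (real d)^2)" by (rule bt)
qed

end
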